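(* Let $\mathcal{I}$ be an independent configuration of $d$ doors in which all doors have the same fundamental distribution, and let $A_{\mathrm{simp}}=(1,2,\dots,d)^\infty$. Then $\mathbb{T}_{\mathcal{I}}(A_{\mathrm{simp}})=\Theta(\mathbb{T}_{\mathcal{I}})$, with universal constants.
   Context: Doors $1,\dots,d$ ($d\ge2$) are initially closed and stay open once opened. In an independent configuration with common fundamental distribution $p$, doors behave mutually independently and each door is still closed after $n$ knocks on it with probability $p(n)$ ($p(0)=1$, $p$ non-increasing, $\sum_n p(n)<\infty$). A knock sequence is an infinite sequence of door indices executed in order without any feedback; $\mathbb{T}_{\mathcal{I}}(\pi)$ is the expected number of knocks until all doors are open when running $\pi$, and $\mathbb{T}_{\mathcal{I}}=\inf_\pi\mathbb{T}_{\mathcal{I}}(\pi)$. $A_{\mathrm{simp}}$ is the sequence $1,2,\dots,d,1,2,\dots,d,\dots$. *)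

theory Defs
  imports "HOL-Analysis.Analysis"
begin

text \<open>Fundamental distribution: p(n) = probability a door is still closed after n knocks.\<close>
definition fundamental_distribution :: "(nat \<Rightarrow> real) \<Rightarrow> bool" where
  "fundamental_distribution p \<longleftrightarrow>
     p 0 = 1 \<and> (\<forall>n. 0 \<le> p n) \<and> antimono p \<and> summable p"

definition knock_seqs :: "nat \<Rightarrow> (nat \<Rightarrow> nat) set" where
  "knock_seqs d = {\<pi>. \<forall>s. \<pi> s \<in> {1..d}}"

definition knocks_on :: "(nat \<Rightarrow> nat) \<Rightarrow> nat \<Rightarrow> nat \<Rightarrow> nat" where
  "knocks_on \<pi> i t = card {s. s < t \<and> \<pi> s = i}"

text \<open>Probability that not all doors are open after the first t knocks
  (independent doors, common fundamental distribution p).\<close>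
definition not_all_open :: "nat \<Rightarrow> (nat \<Rightarrow> real) \<Rightarrow> (nat \<Rightarrow> nat) \<Rightarrow> nat \<Rightarrow> real" where
  "not_all_open d p \<pi> t = 1 - (\<Prod>i\<in>{1..d}. (1 - p (knocks_on \<pi> i t)))"

text \<open>Expected number of knocks until all doors are open: E[T] = sum_t P(T > t)
  (possibly infinite).\<close>
definition expected_time :: "nat \<Rightarrow> (nat \<Rightarrow> real) \<Rightarrow> (nat \<Rightarrow> nat) \<Rightarrow> ennreal" where
  "expected_time d p \<pi> = (\<Sum>t. ennreal (not_all_open d p \<pi> t))"

definition opt_time :: "nat \<Rightarrow> (nat \<Rightarrow> real) \<Rightarrow> ennreal" where
  "opt_time d p = (INF \<pi>\<in>knock_seqs d. expected_time d p \<pi>)"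

definition A_simp :: "nat \<Rightarrow> nat \<Rightarrow> nat" where
  "A_simp d t = t mod d + 1"

end

theory Submission
  imports Defs
begin

lemma fd_props:
  assumes "fundamental_distribution p"
  shows "0 \<le> p n" "p n \<le> 1" "m \<le> n \<Longrightarrow> p n \<le> p m"
proof -
  have a: "antimono p" and p0: "p 0 = 1" and nn: "\<And>n. 0 \<le> p n"
    using assms unfolding fundamental_distribution_def by auto
  show "0 \<le> p n" by (rule nn)
  show "m \<le> n \<Longrightarrow> p n \<le> p m" using a unfolding antimono_def by auto
  have "p n \<le> p 0" using a unfolding antimono_def by auto
  then show "p n \<le> 1" using p0 by simp
qed

lemma knocks_simp_lower:
  assumes "1 \<le> i" "i \<le> d"
  shows "t div d \<le> knocks_on (A_simp d) i t"
proof -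
  have dpos: "0 < d" using assms by simp
  let ?S = "{s. s < t \<and> A_simp d s = i}"
  let ?g = "\<lambda>k. k * d + (i - 1)"
  have sub: "?g ` {..<t div d} \<subseteq> ?S"
  proof
    fix x assume "x \<in> ?g ` {..<t div d}"
    then obtain k where k: "k < t div d" "x = k * d + (i - 1)" by auto
    have "Suc k * d \<le> (t div d) * d" using k(1) by (metis Suc_leI mult_le_mono1)
    also have "\<dots> \<le> t" by simp
    finally have "x < t" using k(2) assms by simp
    moreover have "x mod d = i - 1"
    proof -
      have "i - 1 < d" using assms by simp
      then show ?thesis using k(2) by (simp only: mod_mult_self3 mod_less)
    qed
    ultimately show "x \<in> ?S" using assms unfolding A_simp_def by auto
  qed
  have inj: "inj_on ?g {..<t div d}" by (rule inj_onI) (use dpos in simp)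
  have "card (?g ` {..<t div d}) \<le> card ?S"
    by (rule card_mono[OF _ sub]) auto
  then show ?thesis using card_image[OF inj] unfolding knocks_on_def by simp
qed

lemma simp_upper:
  assumes fd: "fundamental_distribution p" and d: "1 \<le> d"
  shows "not_all_open d p (A_simp d) t \<le> 1 - (1 - p (t div d)) ^ d"
proof -
  have "(\<Prod>i\<in>{1..d}. (1 - p (t div d))) \<le> (\<Prod>i\<in>{1..d}. (1 - p (knocks_on (A_simp d) i t)))"
  proof (rule prod_mono)
    fix i assume i: "i \<in> {1..d}"
    show "0 \<le> 1 - p (t div d) \<and> 1 - p (t div d) \<le> 1 - p (knocks_on (A_simp d) i t)"
      using fd_props[OF fd] knocks_simp_lower[of i d t] i by force
  qed
  then show ?thesis unfolding not_all_open_def by simp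
qed

lemma sum_knocks:
  assumes "\<pi> \<in> knock_seqs d"
  shows "(\<Sum>i\<in>{1..d}. knocks_on \<pi> i t) = t"
proof (induction t)
  case 0
  then show ?case unfolding knocks_on_def by simp
next
  case (Suc t)
  have step: "knocks_on \<pi> i (Suc t) = knocks_on \<pi> i t + (if \<pi> t = i then 1 else 0)" for i
  proof -
    show ?thesis
    proof (cases "\<pi> t = i")
      case True
      then have "{s. s < Suc t \<and> \<pi> s = i} = insert t {s. s < t \<and> \<pi> s = i}" by auto
      then show ?thesis unfolding knocks_on_def using True by simp
    next
      case False
      then have "{s. s < Suc t \<and> \<pi> s = i} = {s. s < t \<and> \<pi> s = i}"
        using less_Suc_eq by auto
      then show ?thesis unfolding knocks_on_def using False by simp
    qed
  qed
  have mem: "\<pi> t \<in> {1..d}" using assms unfolding knock_seqs_def by auto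
  have "(\<Sum>i\<in>{1..d}. (if \<pi> t = i then 1 else 0::nat)) = 1"
    using mem by (simp add: sum.delta)
  then show ?case using Suc by (simp add: step sum.distrib)
qed

lemma count_bad:
  assumes "\<pi> \<in> knock_seqs d" "1 \<le> d"
  shows "card {i\<in>{1..d}. 2 * t < d * knocks_on \<pi> i t} \<le> d div 2"
proof (rule ccontr)
  let ?B = "{i\<in>{1..d}. 2 * t < d * knocks_on \<pi> i t}"
  assume "\<not> ?thesis"
  then have cB: "d div 2 + 1 \<le> card ?B" by simp
  have "(\<Sum>i\<in>?B. (2 * t + 1)) \<le> (\<Sum>i\<in>?B. d * knocks_on \<pi> i t)"
    by (rule sum_mono) auto
  also have "\<dots> = d * (\<Sum>i\<in>?B. knocks_on \<pi> i t)" by (simp add: sum_distrib_left)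
  also have "\<dots> \<le> d * (\<Sum>i\<in>{1..d}. knocks_on \<pi> i t)"
    by (intro mult_le_mono2 sum_mono2) auto
  also have "\<dots> = d * t" using sum_knocks[OF assms(1)] by simp
  finally have "card ?B * (2 * t + 1) \<le> d * t" by simp
  moreover have "(d div 2 + 1) * (2 * t + 1) \<le> card ?B * (2 * t + 1)"
    using cB by (rule mult_le_mono1)
  ultimately have "(d div 2 + 1) * (2 * t + 1) \<le> d * t" by linarith
  moreover have "d * t < (d div 2 + 1) * (2 * t + 1)"
  proof -
    have "d \<le> 2 * (d div 2 + 1)" by simp
    then have "d * t \<le> (d div 2 + 1) * (2 * t)" by (metis mult.assoc mult.commute mult_le_mono1)
    then show ?thesis by simp
  qed
  ultimately show False by simp
qed

lemma pow_ineq: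
  fixes x :: real
  assumes "0 \<le> x" "x \<le> 1" "d \<le> 2 * h"
  shows "(1 - x ^ d) / 2 \<le> 1 - x ^ h"
proof -
  have "x ^ (2 * h) \<le> x ^ d" using assms by (intro power_decreasing) auto
  moreover have "x ^ (2*h) = x^h * x^h" by (simp add: power_add mult_2)
  moreover have y1: "x ^ h \<le> 1" using assms by (auto simp: power_le_one)
  moreover have "(1 - x^h) * (1 + x^h) \<le> (1 - x^h) * 2"
    by (rule mult_left_mono) (use y1 in auto)
  moreover have "(1 - x^h) * (1 + x^h) = 1 - x^h * x^h" by (simp add: algebra_simps)
  ultimately have "1 - x ^ d \<le> 2 * (1 - x ^ h)" by linarith
  then show ?thesis by simp
qed

lemma general_lower:
  assumes fd: "fundamental_distribution p" and d: "1 \<le> d" and pi: "\<pi> \<in> knock_seqs d"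
  shows "(1 - (1 - p (2 * t div d)) ^ d) / 2 \<le> not_all_open d p \<pi> t"
proof -
  let ?n = "\<lambda>i. knocks_on \<pi> i t"
  let ?q = "\<lambda>n. 1 - p n"
  let ?m = "2 * t div d"
  let ?B = "{i\<in>{1..d}. 2 * t < d * ?n i}"
  let ?G = "{i\<in>{1..d}. \<not> 2 * t < d * ?n i}"
  have q01: "0 \<le> ?q n" "?q n \<le> 1" for n using fd_props[OF fd] by auto
  have cB: "card ?B \<le> d div 2" by (rule count_bad[OF pi d])
  have "?G \<union> ?B = {1..d}" by auto
  then have "card (?G \<union> ?B) = d" by simp
  moreover have "card (?G \<union> ?B) = card ?G + card ?B"
    by (rule card_Un_disjoint) auto
  ultimately have cU: "card ?G + card ?B = d" by simp
  then have cG: "d - d div 2 \<le> card ?G" using cB by linarith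
  have split: "{1..d} = ?G \<union> ?B" by auto
  have "(\<Prod>i\<in>{1..d}. ?q (?n i)) = (\<Prod>i\<in>?G. ?q (?n i)) * (\<Prod>i\<in>?B. ?q (?n i))"
    by (subst split, rule prod.union_disjoint) auto
  also have "\<dots> \<le> (\<Prod>i\<in>?G. ?q (?n i))"
  proof -
    have "(\<Prod>i\<in>?B. ?q (?n i)) \<le> 1" by (rule prod_le_1) (use q01 in auto)
    moreover have "0 \<le> (\<Prod>i\<in>?G. ?q (?n i))" by (rule prod_nonneg) (use q01 in auto)
    ultimately show ?thesis by (simp add: mult_left_le)
  qed
  also have "\<dots> \<le> (\<Prod>i\<in>?G. ?q ?m)"
  proof (rule prod_mono)
    fix i assume i: "i \<in> ?G"
    then have "?n i * d \<le> 2 * t" by (simp add: mult.commute)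
    then have "?n i \<le> ?m" using d by (simp add: less_eq_div_iff_mult_less_eq)
    then show "0 \<le> ?q (?n i) \<and> ?q (?n i) \<le> ?q ?m" using fd_props[OF fd] q01 by force
  qed
  also have "\<dots> = ?q ?m ^ card ?G" by simp
  also have "\<dots> \<le> ?q ?m ^ (d - d div 2)"
    using q01 cG by (intro power_decreasing) auto
  finally have P: "(\<Prod>i\<in>{1..d}. ?q (?n i)) \<le> ?q ?m ^ (d - d div 2)" .
  have "(1 - ?q ?m ^ d) / 2 \<le> 1 - ?q ?m ^ (d - d div 2)"
    by (rule pow_ineq) (use q01 in auto)
  then show ?thesis using P unfolding not_all_open_def by simp
qed

lemma pair_sum:
  fixes g :: "nat \<Rightarrow> ennreal"
  shows "(\<Sum>t<n. g (2*t) + g (2*t+1)) = (\<Sum>t<2*n. g t)"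
  by (induction n) (simp_all add: add.assoc)

lemma suminf_pairs_le:
  fixes g :: "nat \<Rightarrow> ennreal"
  shows "suminf g \<le> (\<Sum>t. g (2*t) + g (2*t+1))"
proof (rule suminf_le_const)
  show "summable g" by (rule summableI)
  fix n
  have "(\<Sum>t<n. g t) \<le> (\<Sum>t<2*n. g t)" by (rule sum_mono2) auto
  also have "\<dots> = (\<Sum>t<n. g (2*t) + g (2*t+1))" by (rule pair_sum[symmetric])
  also have "\<dots> \<le> (\<Sum>t. g (2*t) + g (2*t+1))" by (rule sum_le_suminf) (auto intro: summableI)
  finally show "(\<Sum>t<n. g t) \<le> (\<Sum>t. g (2*t) + g (2*t+1))" .
qed

lemma main_bound:
  assumes fd: "fundamental_distribution p" and d: "1 \<le> d" and pi: "\<pi> \<in> knock_seqs d"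
  shows "expected_time d p (A_simp d) \<le> 4 * expected_time d p \<pi>"
proof -
  define f where "f k = 1 - (1 - p k) ^ d" for k
  have f0: "0 \<le> f k" for k
    unfolding f_def using fd_props[OF fd] by (simp add: power_le_one)
  have fmono: "k \<le> l \<Longrightarrow> f l \<le> f k" for k l
    unfolding f_def using fd_props[OF fd, of l] fd_props[OF fd, of k]
    by (simp add: power_mono)
  let ?a = "\<lambda>t. ennreal (f (t div d))"
  let ?b = "\<lambda>t. ennreal (f (2 * t div d))"
  have "expected_time d p (A_simp d) \<le> suminf ?a"
    unfolding expected_time_def
    by (rule suminf_le) (auto intro!: summableI ennreal_leI simp: f_def simp_upper[OF fd d])
  also have "\<dots> \<le> (\<Sum>t. ?a (2*t) + ?a (2*t+1))" by (rule suminf_pairs_le)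
  also have "\<dots> \<le> (\<Sum>t. 2 * ?b t)"
  proof (rule suminf_le)
    fix t
    have "(2*t+1) div d \<ge> 2*t div d" by (simp add: div_le_mono)
    then have "f ((2*t+1) div d) \<le> f (2*t div d)" by (rule fmono)
    then have "?a (2*t) + ?a (2*t+1) = ennreal (f (2*t div d) + f ((2*t+1) div d))"
      using f0 by (simp add: ennreal_plus)
    also have "\<dots> \<le> ennreal (2 * f (2*t div d))"
      using \<open>f ((2*t+1) div d) \<le> f (2*t div d)\<close> by (intro ennreal_leI) simp
    also have "\<dots> = 2 * ?b t" using f0 by (simp add: ennreal_mult)
    finally show "?a (2*t) + ?a (2*t+1) \<le> 2 * ?b t" .
  qed (auto intro: summableI)
  also have "\<dots> = 2 * suminf ?b" by (rule ennreal_suminf_cmult)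
  also have "\<dots> = 4 * (\<Sum>t. ennreal (f (2 * t div d) / 2))"
  proof -
    have "(\<Sum>t. ennreal (f (2 * t div d) / 2)) = (\<Sum>t. ?b t / 2)"
      using f0 by (simp add: ennreal_divide_numeral)
    also have "\<dots> = suminf ?b / 2" by simp
    finally have e: "(\<Sum>t. ennreal (f (2 * t div d) / 2)) = suminf ?b / 2" .
    have "(4::ennreal) * (suminf ?b / 2) = 2 * suminf ?b"
    proof -
      have "(4::ennreal) = 2 * 2" by simp
      then have "(4::ennreal) * (suminf ?b / 2) = 2 * (2 * (suminf ?b / 2))" by (simp add: mult.assoc)
      also have "2 * (suminf ?b / 2) = suminf ?b"
        by (simp add: ennreal_times_divide mult.commute[of 2] mult_divide_eq_ennreal)
      finally show ?thesis by simp
    qed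
    then show ?thesis using e by simp
  qed
  also have "\<dots> \<le> 4 * expected_time d p \<pi>"
    unfolding expected_time_def
  proof (intro mult_left_mono suminf_le)
    fix n
    show "ennreal (f (2 * n div d) / 2) \<le> ennreal (not_all_open d p \<pi> n)"
      using general_lower[OF fd d pi, of n] unfolding f_def by (rule ennreal_leI)
  qed (auto intro: summableI)
  finally show ?thesis .
qed

theorem mainTheorem4:
  "\<exists>c C :: real. 0 < c \<and> 0 < C \<and>
     (\<forall>d p. 2 \<le> d \<longrightarrow> fundamental_distribution p \<longrightarrow>
        ennreal c * opt_time d p \<le> expected_time d p (A_simp d) \<and>
        expected_time d p (A_simp d) \<le> ennreal C * opt_time d p)"
proof (intro exI conjI allI impI)
  show "(0::real) < 1" by simp
  show "(0::real) < 4" by simp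
  fix d :: nat and p assume d: "2 \<le> d" and fd: "fundamental_distribution p"
  have mem: "A_simp d \<in> knock_seqs d"
    unfolding knock_seqs_def A_simp_def using d by (auto simp: Suc_le_eq)
  show "ennreal 1 * opt_time d p \<le> expected_time d p (A_simp d)"
  proof -
    have "opt_time d p \<le> expected_time d p (A_simp d)"
      unfolding opt_time_def by (rule INF_lower[OF mem])
    then show ?thesis by simp
  qed
  let ?E = "expected_time d p (A_simp d)"
  have "?E / 4 \<le> opt_time d p"
    unfolding opt_time_def
  proof (rule INF_greatest)
    fix \<pi> assume "\<pi> \<in> knock_seqs d"
    then have "?E \<le> 4 * expected_time d p \<pi>" using main_bound[OF fd] d by simp
    then show "?E / 4 \<le> expected_time d p \<pi>" by (intro divide_le_posI_ennreal) auto
  qed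
  then have "4 * (?E / 4) \<le> 4 * opt_time d p" by (rule mult_left_mono) (rule zero_le)
  moreover have "4 * (?E / 4) = ?E"
  proof -
    have "4 * (?E / 4) = 4 * ?E / 4" by (rule ennreal_times_divide)
    also have "\<dots> = ?E * 4 / 4" by (simp only: mult.commute)
    also have "\<dots> = ?E" by (rule mult_divide_eq_ennreal) simp_all
    finally show ?thesis .
  qed
  moreover have "ennreal 4 = (4::ennreal)" by simp
  ultimately show "?E \<le> ennreal 4 * opt_time d p" by metis
qed

end
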